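(* Let $n\ge1$, $m_1,\dots,m_n\in\mathbb{N}$, and let $U_1,\dots,U_n$ be independent standard Gaussian random variables. For real variables $x=(x_{ij})_{1\le i,j\le n}$ set $X_i=\sum_{j=1}^n x_{ij}U_j$, $1\le i\le n$. Then the function $$P(x)=E\Big[\prod_{j=1}^n X_j^{2m_j}\Big]$$ is a polynomial in the $n^2$ variables $x_{ij}$ which admits a sum-of-squares representation, i.e. $P=\sum_{i=1}^p f_i^2$ for some real-coefficient polynomials $f_1,\dots,f_p$ in the variables $x_{ij}$.
   Context: A sum-of-squares (SOS) representation of a multivariate real polynomial is an expression of it as $\sum_{i=1}^p f_i^2$ with each $f_i$ a real-coefficient polynomial. *)

theory Defs
  imports "HOL-Probability.Probability"
begin

text \<open>A point is a function nat*nat => real; over the infinite field R, polynomial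
  functions correspond exactly to real-coefficient polynomials.\<close>
inductive poly_fun :: "(nat \<times> nat) set \<Rightarrow> ((nat \<times> nat \<Rightarrow> real) \<Rightarrow> real) \<Rightarrow> bool"
  for V :: "(nat \<times> nat) set" where
  pf_const: "poly_fun V (\<lambda>x. c)"
| pf_var: "v \<in> V \<Longrightarrow> poly_fun V (\<lambda>x. x v)"
| pf_add: "poly_fun V f \<Longrightarrow> poly_fun V g \<Longrightarrow> poly_fun V (\<lambda>x. f x + g x)"
| pf_mult: "poly_fun V f \<Longrightarrow> poly_fun V g \<Longrightarrow> poly_fun V (\<lambda>x. f x * g x)"

definition is_sos :: "(nat \<times> nat) set \<Rightarrow> ((nat \<times> nat \<Rightarrow> real) \<Rightarrow> real) \<Rightarrow> bool" where
  "is_sos V P \<longleftrightarrow> (\<exists>fs. (\<forall>f\<in>set fs. poly_fun V f) \<and> (\<forall>x. P x = (\<Sum>f\<leftarrow>fs. (f x)\<^sup>2)))"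

end

theory Submission
  imports Defs
begin


lemma sos_square: "poly_fun V f \<Longrightarrow> is_sos V (\<lambda>x. (f x)\<^sup>2)"
  unfolding is_sos_def by (rule exI[of _ "[f]"]) simp

lemma sos_zero: "is_sos V (\<lambda>x. 0)"
  unfolding is_sos_def by (rule exI[of _ "[]"]) simp

lemma sos_add: "is_sos V P \<Longrightarrow> is_sos V Q \<Longrightarrow> is_sos V (\<lambda>x. P x + Q x)"
  unfolding is_sos_def
  apply (elim exE conjE)
  subgoal for fs gs by (rule exI[of _ "fs @ gs"]) auto
  done

lemma sos_cong: "is_sos V P \<Longrightarrow> (\<And>x. P x = Q x) \<Longrightarrow> is_sos V Q"
  unfolding is_sos_def by auto

lemma poly_sum: "(\<And>i. i \<in> A \<Longrightarrow> poly_fun V (f i)) \<Longrightarrow> poly_fun V (\<lambda>x. \<Sum>i\<in>A. f i x)"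
proof (induction A rule: infinite_finite_induct)
  case (infinite A) then show ?case using pf_const by simp
next
  case empty then show ?case using pf_const by simp
next
  case (insert a F) then show ?case by (simp add: pf_add)
qed

lemma poly_prod: "(\<And>i. i \<in> A \<Longrightarrow> poly_fun V (f i)) \<Longrightarrow> poly_fun V (\<lambda>x. \<Prod>i\<in>A. f i x)"
proof (induction A rule: infinite_finite_induct)
  case (infinite A) then show ?case using pf_const by simp
next
  case empty then show ?case using pf_const by simp
next
  case (insert a F) then show ?case by (simp add: pf_mult)
qed

lemma poly_sum_list: "(\<And>f. f \<in> set fs \<Longrightarrow> poly_fun V f) \<Longrightarrow> poly_fun V (\<lambda>x. \<Sum>f\<leftarrow>fs. (f x)\<^sup>2)"
proof (induction fs)
  case Nil then show ?case using pf_const by simp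
next
  case (Cons a fs) then show ?case by (simp add: pf_add pf_mult power2_eq_square)
qed

lemma sos_poly: "is_sos V P \<Longrightarrow> poly_fun V P"
  unfolding is_sos_def
proof (elim exE conjE)
  fix fs assume "\<forall>f\<in>set fs. poly_fun V f" "\<forall>x. P x = (\<Sum>f\<leftarrow>fs. (f x)\<^sup>2)"
  then show "poly_fun V P" using poly_sum_list[of fs V]
    by (metis (no_types, lifting) ext)
qed

definition qf :: "nat \<Rightarrow> (nat \<Rightarrow> nat \<Rightarrow> real) \<Rightarrow> (nat \<Rightarrow> real) \<Rightarrow> real" where
  "qf N G z = (\<Sum>i<N. \<Sum>k<N. z i * z k * G i k)"

lemma qf_Suc:
  assumes sym: "\<And>i k. G i k = G k i"
  shows "qf (Suc N) G z = qf N G z + 2 * z N * (\<Sum>k<N. G N k * z k) + G N N * (z N)\<^sup>2"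
proof -
  have "qf (Suc N) G z = qf N G z + (\<Sum>i<N. z i * z N * G i N) + (\<Sum>k<N. z N * z k * G N k) + z N * z N * G N N"
    unfolding qf_def by (simp add: sum.distrib algebra_simps)
  also have "(\<Sum>i<N. z i * z N * G i N) = z N * (\<Sum>k<N. G N k * z k)"
    by (simp add: sum_distrib_left sym mult_ac)
  also have "(\<Sum>k<N. z N * z k * G N k) = z N * (\<Sum>k<N. G N k * z k)"
    by (simp add: sum_distrib_left mult_ac)
  finally show ?thesis by (simp add: power2_eq_square)
qed

lemma qf_cong: "(\<And>i. i < N \<Longrightarrow> z i = w i) \<Longrightarrow> qf N G z = qf N G w"
  unfolding qf_def by simp

lemma lin_nonneg_zero:
  fixes b q :: real
  assumes "\<And>t. 0 \<le> 2 * t * b + q" shows "b = 0"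
proof (rule ccontr)
  assume "b \<noteq> 0"
  have "0 \<le> 2 * (- (q + 1) / (2 * b)) * b + q" by (rule assms)
  also have "\<dots> = -1" using \<open>b \<noteq> 0\<close> by (simp add: field_simps)
  finally show False by simp
qed

lemma psd_sos:
  "\<And>G c. (\<And>i k. G i k = G k i) \<Longrightarrow> (\<And>z. 0 \<le> qf N G z) \<Longrightarrow> (\<And>i. i < N \<Longrightarrow> poly_fun V (c i))
   \<Longrightarrow> is_sos V (\<lambda>x. qf N G (\<lambda>i. c i x))"
proof (induction N)
  case 0 then show ?case by (simp add: qf_def sos_zero)
next
  case (Suc N)
  note sym = Suc.prems(1) and psd = Suc.prems(2) and pc = Suc.prems(3)
  define a where "a = G N N"
  define s where "s z = (\<Sum>k<N. G N k * z k)" for z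
  have Q: "qf (Suc N) G z = qf N G z + 2 * z N * s z + a * (z N)\<^sup>2" for z
    using qf_Suc[of G N z, OF sym] unfolding s_def a_def by blast
  have a0: "a \<ge> 0"
  proof -
    have "0 \<le> qf (Suc N) G (\<lambda>i. if i = N then 1 else 0)" by (rule psd)
    also have "\<dots> = a" unfolding Q s_def qf_def a_def by simp
    finally show ?thesis .
  qed
  have pN: "poly_fun V (\<lambda>x. s (\<lambda>i. c i x))"
    unfolding s_def by (rule poly_sum, rule pf_mult, rule pf_const, rule pc) auto
  show ?case
  proof (cases "a = 0")
    case True
    have psd': "0 \<le> qf N G z" for z
    proof -
      have "0 \<le> qf (Suc N) G (z(N := 0))" by (rule psd)
      also have "qf (Suc N) G (z(N := 0)) = qf N G z"
        unfolding Q by (simp add: qf_cong[of N "z(N:=0)" z])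
      finally show ?thesis .
    qed
    have b0: "s z = 0" for z
    proof (rule lin_nonneg_zero[of _ "qf N G z"])
      fix t
      have "0 \<le> qf (Suc N) G (z(N := t))" by (rule psd)
      also have "qf (Suc N) G (z(N := t)) = 2 * t * s z + qf N G z"
        unfolding Q using True by (simp add: qf_cong[of N "z(N:=t)" z] s_def)
      finally show "0 \<le> 2 * t * s z + qf N G z" .
    qed
    have "is_sos V (\<lambda>x. qf N G (\<lambda>i. c i x))"
      using Suc.IH[OF sym psd'] pc by simp
    then show ?thesis
      by (rule sos_cong) (simp add: Q b0 True)
  next
    case False
    with a0 have apos: "a > 0" by simp
    define G' where "G' i k = G i k - G N i * G N k / a" for i k
    have sym': "G' i k = G' k i" for i k unfolding G'_def using sym[of i k] by (simp add: mult.commute)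
    have qf': "qf N G' z = qf N G z - (s z)\<^sup>2 / a" for z
    proof -
      have "qf N G' z = qf N G z - (\<Sum>i<N. \<Sum>k<N. (z i * G N i) * (z k * G N k)) / a"
        unfolding qf_def G'_def
        by (simp add: algebra_simps sum_subtractf sum_divide_distrib)
      also have "(\<Sum>i<N. \<Sum>k<N. (z i * G N i) * (z k * G N k)) = (s z)\<^sup>2"
        unfolding s_def power2_eq_square sum_product by (simp add: mult_ac)
      finally show ?thesis .
    qed
    have decomp: "qf (Suc N) G z = qf N G' z + (sqrt a * (z N + s z / a))\<^sup>2" for z
      using apos unfolding Q qf' power_mult_distrib real_sqrt_pow2[OF a0] by (simp add: power2_eq_square field_simps)
    have psd': "0 \<le> qf N G' z" for z
    proof -
      define w where "w = z(N := - s z / a)"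
      have sw: "s w = s z" unfolding w_def s_def by simp
      have "0 \<le> qf (Suc N) G w" by (rule psd)
      also have "\<dots> = qf N G' w" unfolding decomp sw by (simp add: w_def)
      also have "\<dots> = qf N G' z" by (rule qf_cong) (simp add: w_def)
      finally show ?thesis .
    qed
    have "is_sos V (\<lambda>x. qf N G' (\<lambda>i. c i x))"
      using Suc.IH[OF sym' psd'] pc by simp
    moreover have "poly_fun V (\<lambda>x. sqrt a * (c N x + s (\<lambda>i. c i x) * inverse a))"
      by (rule pf_mult[OF pf_const pf_add[OF pc[OF lessI] pf_mult[OF pN pf_const]]])
    ultimately have "is_sos V (\<lambda>x. qf N G' (\<lambda>i. c i x) + (sqrt a * (c N x + s (\<lambda>i. c i x) * inverse a))\<^sup>2)"
      by (rule sos_add[OF _ sos_square])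
    then show ?thesis
      by (rule sos_cong) (simp only: decomp divide_inverse)
  qed
qed



definition good :: "'a measure \<Rightarrow> ('a \<Rightarrow> real) \<Rightarrow> bool" where
  "good M f \<longleftrightarrow> f \<in> borel_measurable M \<and> (\<forall>p. integrable M (\<lambda>w. \<bar>f w\<bar> ^ p))"

lemma ab_le: "0 \<le> a \<Longrightarrow> 0 \<le> b \<Longrightarrow> a * b \<le> a\<^sup>2 + (b::real)\<^sup>2"
proof -
  assume "0 \<le> a" "0 \<le> b"
  have "0 \<le> (a - b)\<^sup>2" by simp
  moreover have "0 \<le> a * b" using \<open>0 \<le> a\<close> \<open>0 \<le> b\<close> by simp
  moreover have "(a - b)\<^sup>2 = a\<^sup>2 + b\<^sup>2 - 2 * (a * b)" by (simp add: power2_eq_square algebra_simps)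
  ultimately show ?thesis by linarith
qed

lemma good_mult: assumes "good M f" "good M g" shows "good M (\<lambda>w. f w * g w)"
  unfolding good_def
proof (intro conjI allI)
  show "(\<lambda>w. f w * g w) \<in> borel_measurable M" using assms unfolding good_def by (intro borel_measurable_times) auto
next
  fix p
  have i: "integrable M (\<lambda>w. \<bar>f w\<bar> ^ (2*p) + \<bar>g w\<bar> ^ (2*p))"
    using assms unfolding good_def by auto
  show "integrable M (\<lambda>w. \<bar>f w * g w\<bar> ^ p)"
  proof (rule Bochner_Integration.integrable_bound[OF i])
    show "(\<lambda>w. \<bar>f w * g w\<bar> ^ p) \<in> borel_measurable M" using assms unfolding good_def by (intro borel_measurable_power borel_measurable_abs borel_measurable_times) auto
    show "AE w in M. norm (\<bar>f w * g w\<bar> ^ p) \<le> norm (\<bar>f w\<bar> ^ (2*p) + \<bar>g w\<bar> ^ (2*p))"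
    proof (rule AE_I2)
      fix w
      have "\<bar>f w\<bar>^p * \<bar>g w\<bar>^p \<le> (\<bar>f w\<bar>^p)\<^sup>2 + (\<bar>g w\<bar>^p)\<^sup>2" by (rule ab_le) auto
      moreover have "\<bar>f w * g w\<bar>^p = \<bar>f w\<bar>^p * \<bar>g w\<bar>^p" by (simp add: abs_mult power_mult_distrib)
      moreover have "(\<bar>f w\<bar>^p)\<^sup>2 = \<bar>f w\<bar>^(2*p)" "(\<bar>g w\<bar>^p)\<^sup>2 = \<bar>g w\<bar>^(2*p)"
        by (simp_all only: power_mult[of _ p 2, symmetric] mult.commute[of p 2])
      ultimately have le: "\<bar>f w * g w\<bar> ^ p \<le> \<bar>f w\<bar> ^ (2*p) + \<bar>g w\<bar> ^ (2*p)"
        by (simp only:)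
      have n1: "norm (\<bar>f w * g w\<bar> ^ p) = \<bar>f w * g w\<bar> ^ p" by simp
      have n2: "norm (\<bar>f w\<bar> ^ (2*p) + \<bar>g w\<bar> ^ (2*p)) = \<bar>f w\<bar> ^ (2*p) + \<bar>g w\<bar> ^ (2*p)"
        by (simp only: real_norm_def) (rule abs_of_nonneg, simp)
      show "norm (\<bar>f w * g w\<bar> ^ p) \<le> norm (\<bar>f w\<bar> ^ (2*p) + \<bar>g w\<bar> ^ (2*p))"
        unfolding n1 n2 by (rule le)
    qed
  qed
qed

lemma good_const: assumes "prob_space M" shows "good M (\<lambda>w. c)"
proof -
  interpret prob_space M by fact
  show ?thesis unfolding good_def by auto
qed

lemma good_integrable: "good M f \<Longrightarrow> integrable M f"
proof -
  assume g: "good M f"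
  then have "integrable M (\<lambda>w. \<bar>f w\<bar> ^ 1)" "f \<in> borel_measurable M" unfolding good_def by blast+
  then show "integrable M f" using integrable_abs_iff[of f M] by simp
qed

lemma good_U:
  assumes "distributed M lborel X (\<lambda>u. ennreal (std_normal_density u))"
  shows "good M X"
  unfolding good_def
proof (intro conjI allI)
  have "X \<in> measurable M lborel" using assms by (rule distributed_measurable)
  then show m: "X \<in> borel_measurable M" by simp
  fix p
  have "integrable lborel (\<lambda>x. std_normal_density x * \<bar>x\<bar>^p)"
    by (rule integrable_std_normal_moment_abs)
  then show "integrable M (\<lambda>w. \<bar>X w\<bar> ^ p)"
    using distributed_integrable[OF assms, of "\<lambda>x. \<bar>x\<bar>^p"] by simp
qed

definition rep :: "(nat \<times> nat) set \<Rightarrow> 'a measure \<Rightarrow> ((nat \<times> nat \<Rightarrow> real) \<Rightarrow> 'a \<Rightarrow> real) \<Rightarrow> bool" where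
  "rep V M F \<longleftrightarrow> (\<exists>ps. (\<forall>p\<in>set ps. poly_fun V (fst p) \<and> good M (snd p)) \<and>
      (\<forall>x w. F x w = (\<Sum>p\<leftarrow>ps. fst p x * snd p w)))"

lemma rep_cong: "rep V M F \<Longrightarrow> (\<And>x w. F x w = G x w) \<Longrightarrow> rep V M G"
  unfolding rep_def by auto

lemma rep_zero: "rep V M (\<lambda>x w. 0)"
  unfolding rep_def by (rule exI[of _ "[]"]) simp

lemma rep_basic: "poly_fun V c \<Longrightarrow> good M f \<Longrightarrow> rep V M (\<lambda>x w. c x * f w)"
  unfolding rep_def by (rule exI[of _ "[(c, f)]"]) simp

lemma rep_add: "rep V M F \<Longrightarrow> rep V M G \<Longrightarrow> rep V M (\<lambda>x w. F x w + G x w)"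
  unfolding rep_def
  apply (elim exE conjE)
  subgoal for ps qs by (rule exI[of _ "ps @ qs"]) auto
  done

definition pmul where
  "pmul ps qs = concat (map (\<lambda>p. map (\<lambda>q. (\<lambda>x. fst p x * fst q x, \<lambda>w. snd p w * snd q w)) qs) ps)"

lemma pmul_sum:
  fixes ps qs :: "(('v \<Rightarrow> real) \<times> ('a \<Rightarrow> real)) list"
  shows "(\<Sum>p\<leftarrow>pmul ps qs. fst p x * snd p w) = (\<Sum>p\<leftarrow>ps. fst p x * snd p w) * (\<Sum>q\<leftarrow>qs. fst q x * snd q w)"
proof (induction ps)
  case Nil then show ?case by (simp add: pmul_def)
next
  case (Cons a ps)
  have "(\<Sum>q\<leftarrow>qs. fst a x * fst q x * (snd a w * snd q w)) = fst a x * snd a w * (\<Sum>q\<leftarrow>qs. fst q x * snd q w)"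
    by (simp add: sum_list_const_mult[symmetric] mult_ac)
  with Cons show ?case by (simp add: pmul_def o_def algebra_simps)
qed

lemma pmul_set: "p \<in> set (pmul ps qs) \<Longrightarrow> \<exists>a\<in>set ps. \<exists>b\<in>set qs. p = (\<lambda>x. fst a x * fst b x, \<lambda>w. snd a w * snd b w)"
  unfolding pmul_def by auto

lemma rep_mult: assumes "rep V M F" "rep V M G" shows "rep V M (\<lambda>x w. F x w * G x w)"
proof -
  obtain ps where ps: "\<forall>p\<in>set ps. poly_fun V (fst p) \<and> good M (snd p)" "\<forall>x w. F x w = (\<Sum>p\<leftarrow>ps. fst p x * snd p w)"
    using assms(1) unfolding rep_def by blast
  obtain qs where qs: "\<forall>p\<in>set qs. poly_fun V (fst p) \<and> good M (snd p)" "\<forall>x w. G x w = (\<Sum>p\<leftarrow>qs. fst p x * snd p w)"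
    using assms(2) unfolding rep_def by blast
  have h1: "poly_fun V (fst p) \<and> good M (snd p)" if hp: "p \<in> set (pmul ps qs)" for p
  proof -
    obtain a b where "a \<in> set ps" "b \<in> set qs" and p: "p = (\<lambda>x. fst a x * fst b x, \<lambda>w. snd a w * snd b w)"
      using pmul_set[OF hp] by blast
    then show ?thesis
      using ps(1) qs(1) by (auto intro: pf_mult good_mult)
  qed
  have h2: "F x w * G x w = (\<Sum>p\<leftarrow>pmul ps qs. fst p x * snd p w)" for x w
    using ps(2) qs(2) by (simp add: pmul_sum)
  show ?thesis unfolding rep_def using h1 h2 by blast
qed

lemma rep_sum: "(\<And>i. i < (n::nat) \<Longrightarrow> rep V M (F i)) \<Longrightarrow> rep V M (\<lambda>x w. \<Sum>i<n. F i x w)"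
proof (induction n)
  case 0 then show ?case by (simp add: rep_zero)
next
  case (Suc n) then show ?case by (simp add: rep_add)
qed

lemma rep_one: "prob_space M \<Longrightarrow> rep V M (\<lambda>x w. 1)"
  using rep_basic[OF pf_const good_const, of M V 1 1] by simp

lemma rep_prod: "prob_space M \<Longrightarrow> (\<And>i. i < (n::nat) \<Longrightarrow> rep V M (F i)) \<Longrightarrow> rep V M (\<lambda>x w. \<Prod>i<n. F i x w)"
proof (induction n)
  case 0 then show ?case by (simp add: rep_one)
next
  case (Suc n) then show ?case by (simp add: rep_mult)
qed

lemma rep_power: "prob_space M \<Longrightarrow> rep V M F \<Longrightarrow> rep V M (\<lambda>x w. F x w ^ k)"
proof (induction k)
  case 0 then show ?case by (simp add: rep_one)
next
  case (Suc k) then show ?case by (simp add: rep_mult)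
qed

lemma expand:
  assumes g: "\<And>i. i < N \<Longrightarrow> good M (f i)"
  shows "integral\<^sup>L M (\<lambda>w. (\<Sum>i<N. z i * f i w)\<^sup>2) = qf N (\<lambda>i k. integral\<^sup>L M (\<lambda>w. f i w * f k w)) z"
proof -
  have int: "integrable M (\<lambda>w. f i w * f k w)" if "i < N" "k < N" for i k
    by (rule good_integrable, rule good_mult) (use g that in auto)
  have eq: "(\<lambda>w. (\<Sum>i<N. z i * f i w)\<^sup>2) = (\<lambda>w. \<Sum>i<N. \<Sum>k<N. z i * z k * (f i w * f k w))"
    by (simp add: power2_eq_square sum_product mult_ac)
  have "integral\<^sup>L M (\<lambda>w. (\<Sum>i<N. z i * f i w)\<^sup>2) = (\<Sum>i<N. integral\<^sup>L M (\<lambda>w. \<Sum>k<N. z i * z k * (f i w * f k w)))"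
    unfolding eq by (rule Bochner_Integration.integral_sum) (use int in \<open>auto intro!: integrable_sum integrable_mult_right\<close>)
  also have "\<dots> = (\<Sum>i<N. \<Sum>k<N. integral\<^sup>L M (\<lambda>w. z i * z k * (f i w * f k w)))"
    using int by (intro sum.cong refl Bochner_Integration.integral_sum) (auto intro!: integrable_mult_right)
  also have "\<dots> = qf N (\<lambda>i k. integral\<^sup>L M (\<lambda>w. f i w * f k w)) z"
    unfolding qf_def by simp
  finally show ?thesis .
qed

lemma sl_nth: "(\<Sum>p\<leftarrow>xs. g p) = (\<Sum>i<length xs. (g (xs!i)::real))"
  by (induction xs) (simp_all del: sum.lessThan_Suc add: sum.lessThan_Suc_shift)

lemma rep_sos:
  assumes "rep V M F"
  shows "is_sos V (\<lambda>x. integral\<^sup>L M (\<lambda>w. (F x w)\<^sup>2))"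
proof -
  obtain ps where ps: "\<forall>p\<in>set ps. poly_fun V (fst p) \<and> good M (snd p)" "\<forall>x w. F x w = (\<Sum>p\<leftarrow>ps. fst p x * snd p w)"
    using assms unfolding rep_def by blast
  define N where "N = length ps"
  define c where "c i = fst (ps ! i)" for i
  define f where "f i = snd (ps ! i)" for i
  have F: "F x w = (\<Sum>i<N. c i x * f i w)" for x w
    using ps(2) unfolding N_def c_def f_def sl_nth by blast
  have g: "good M (f i)" "poly_fun V (c i)" if "i < N" for i
    using ps(1) that nth_mem unfolding N_def c_def f_def by auto
  define G where "G i k = integral\<^sup>L M (\<lambda>w. f i w * f k w)" for i k
  have E: "integral\<^sup>L M (\<lambda>w. (\<Sum>i<N. z i * f i w)\<^sup>2) = qf N G z" for z
    unfolding G_def by (rule expand) (erule g(1))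
  have sym: "G i k = G k i" for i k
  proof -
    have "(\<lambda>w. f i w * f k w) = (\<lambda>w. f k w * f i w)" by (rule ext) (rule mult.commute)
    then show ?thesis unfolding G_def by (rule arg_cong)
  qed
  have psd: "0 \<le> qf N G z" for z
  proof -
    have "0 \<le> integral\<^sup>L M (\<lambda>w. (\<Sum>i<N. z i * f i w)\<^sup>2)"
      by (rule integral_nonneg_AE, rule AE_I2, rule zero_le_power2)
    then show ?thesis using E[of z] by simp
  qed
  have "is_sos V (\<lambda>x. qf N G (\<lambda>i. c i x))"
    by (rule psd_sos[OF sym psd]) (erule g(2))
  then show ?thesis
    by (rule sos_cong) (simp only: F E)
qed



theorem mainTheorem6:
  fixes M :: "'a measure" and U :: "nat \<Rightarrow> 'a \<Rightarrow> real" and n :: nat and m :: "nat \<Rightarrow> nat"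
  assumes "prob_space M"
    and "n \<ge> 1"
    and "prob_space.indep_vars M (\<lambda>_. borel) U {..<n}"
    and "\<And>j. j < n \<Longrightarrow> distributed M lborel (U j) (\<lambda>u. ennreal (std_normal_density u))"
  defines "P \<equiv> (\<lambda>x. integral\<^sup>L M (\<lambda>\<omega>. \<Prod>j<n. (\<Sum>k<n. x (j, k) * U k \<omega>) ^ (2 * m j)))"
  shows "poly_fun ({..<n} \<times> {..<n}) P \<and> is_sos ({..<n} \<times> {..<n}) P"
proof -
  let ?V = "{..<n} \<times> {..<n}"
  define Y where "Y x w = (\<Prod>j<n. (\<Sum>k<n. x (j, k) * U k w) ^ m j)" for x w
  have rY: "rep ?V M Y"
    unfolding Y_def
  proof (rule rep_prod[OF assms(1)])
    fix j assume j: "j < n"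
    show "rep ?V M (\<lambda>x w. (\<Sum>k<n. x (j, k) * U k w) ^ m j)"
    proof (rule rep_power[OF assms(1)], rule rep_sum)
      fix k assume k: "k < n"
      show "rep ?V M (\<lambda>x w. x (j, k) * U k w)"
        by (rule rep_basic[OF pf_var good_U]) (use j k assms(4) in auto)
    qed
  qed
  have PY: "P x = integral\<^sup>L M (\<lambda>w. (Y x w)\<^sup>2)" for x
  proof -
    have "(\<Prod>j<n. (\<Sum>k<n. x (j, k) * U k w) ^ (2 * m j)) = (Y x w)\<^sup>2" for w
      unfolding Y_def prod_power_distrib
    proof (rule prod.cong[OF refl])
      fix j show "(\<Sum>k<n. x (j, k) * U k w) ^ (2 * m j) = ((\<Sum>k<n. x (j, k) * U k w) ^ m j)\<^sup>2"
        by (subst mult.commute) (rule power_mult)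
    qed
    then show ?thesis unfolding P_def by simp
  qed
  have "is_sos ?V P"
    by (rule sos_cong[OF rep_sos[OF rY]]) (simp add: PY)
  then show ?thesis using sos_poly by blast
qed

end
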